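(* Let $n\ge2$, $f:\mathbb{R}^n\to\mathbb{R}^n$ continuously differentiable, $b_0\in\mathbb{R}^n_{\ge0}$, $\mu,\theta>0$, $r:=\mu/\theta$. Suppose $x^*\in\mathbb{R}^n_{\ge0}$ and $u_*>0$ satisfy $x^*_n=r$ and $f(x^* )-u_*re_n+b_0=0$. Let $J:=\partial f/\partial x(x^* )$, $H_n(s):=e_n^T\big(sI-(J-u_*e_ne_n^T)\big)^{-1}e_n$, and assume $H_n(0)>0$ and that there exists a symmetric positive definite $P_1\in\mathbb{R}^{(n-1)\times(n-1)}$ such that, with $P:=\mathrm{diag}(P_1,1)$, $$(J-u_*e_ne_n^T)^TP+P(J-u_*e_ne_n^T)\ \text{is negative definite}$$ (equivalently, writing $J_{11}=S^TJS$, $J_{12}=S^TJe_n$, $J_{21}=e_n^TJS$, $J_{22}=e_n^TJe_n$, the matrix $\begin{bmatrix}P_1J_{11}+J_{11}^TP_1 & P_1J_{12}+J_{21}^T\\ J_{12}^TP_1+J_{21} & 2(J_{22}-u_* )\end{bmatrix}$ is negative definite). Then for all $\eta,k_p>0$ the equilibrium $\big(x^*,\ \mu/(\eta u_* ),\ u_*/k_p\big)$ of $$\dot x=f(x)-k_px_nz_2e_n+b_0,\qquad \dot z_1=\mu-\eta k_pz_1z_2,\qquad \dot z_2=\theta x_n-\eta k_pz_1z_2$$ is locally exponentially stable.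
   Context: $S:=[e_1\ \cdots\ e_{n-1}]$, $e_i$ standard basis vectors of $\mathbb{R}^n$; $x_n=e_n^Tx$. Hurwitz stable: all eigenvalues have negative real part. An equilibrium is called locally exponentially stable here if the Jacobian matrix of the vector field at the equilibrium is Hurwitz stable. *)

theory Defs
  imports "HOL-Analysis.Analysis"
begin

definition hurwitz :: "real^'m^'m \<Rightarrow> bool" where
  "hurwitz A \<longleftrightarrow>
     (\<forall>c::complex. det (mat c - (\<chi> i j. complex_of_real (A $ i $ j))) = 0
        \<longrightarrow> Re c < 0)"

definition pos_def :: "real^'m^'m \<Rightarrow> bool" where
  "pos_def M \<longleftrightarrow> (\<forall>v. v \<noteq> 0 \<longrightarrow> v \<bullet> (M *v v) > 0)"

definition neg_def :: "real^'m^'m \<Rightarrow> bool" where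
  "neg_def M \<longleftrightarrow> (\<forall>v. v \<noteq> 0 \<longrightarrow> v \<bullet> (M *v v) < 0)"

text \<open>Closed-loop vector field on the state space indexed by n + bool:
  coordinates Inl j are x_j, Inr False is z1, Inr True is z2. The index k plays the
  role of the last coordinate n.\<close>
definition closed_loop ::
  "(real^'n \<Rightarrow> real^'n) \<Rightarrow> real^'n \<Rightarrow> 'n \<Rightarrow> real \<Rightarrow> real \<Rightarrow> real \<Rightarrow> real
    \<Rightarrow> real^('n + bool) \<Rightarrow> real^('n + bool)" where
  "closed_loop f b0 k \<mu> \<theta> \<eta> kp X =
     (let x = (\<chi> j. X $ Inl j); z1 = X $ Inr False; z2 = X $ Inr True;
          dx = f x - (kp * x $ k * z2) *\<^sub>R axis k 1 + b0
      in (\<chi> i. case i of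
                Inl j \<Rightarrow> dx $ j
              | Inr False \<Rightarrow> \<mu> - \<eta> * kp * z1 * z2
              | Inr True \<Rightarrow> \<theta> * x $ k - \<eta> * kp * z1 * z2))"

definition state_of :: "real^'n \<Rightarrow> real \<Rightarrow> real \<Rightarrow> real^('n + bool)" where
  "state_of x z1 z2 = (\<chi> i. case i of Inl j \<Rightarrow> x $ j | Inr False \<Rightarrow> z1 | Inr True \<Rightarrow> z2)"

end

theory Submission
  imports Defs
begin

lemma vec_lambda_has_derivative:
  fixes g :: "'i::finite \<Rightarrow> 'a::real_normed_vector \<Rightarrow> real"
  assumes "\<And>i. (g i has_derivative g' i) (at a within S)"
  shows "((\<lambda>x. \<chi> i. g i x) has_derivative (\<lambda>h. \<chi> i. g' i h)) (at a within S)"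
proof (subst has_derivative_componentwise_within, intro ballI)
  fix b :: "real^'i" assume "b \<in> Basis"
  then obtain i where b: "b = axis i 1" by (auto simp: Basis_vec_def)
  show "((\<lambda>x. (\<chi> i. g i x) \<bullet> b) has_derivative (\<lambda>x. (\<chi> i. g' i x) \<bullet> b)) (at a within S)"
    by (simp add: b inner_axis assms)
qed

lemma det0_kernel:
  fixes M :: "'a::field^'n^'n"
  assumes "det M = 0"
  shows "\<exists>X. X \<noteq> 0 \<and> M *v X = 0"
proof (rule ccontr)
  assume "\<not> ?thesis"
  hence inj: "inj ((*v) M)"
    by (metis (no_types, lifting) injI matrix_vector_mult_diff_distrib right_minus_eq)
  have "det (matrix ((*v) M)) \<noteq> 0"
    using det_nz_iff_inj_gen[of "(*v) M"] inj by simp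
  thus False using assms by simp
qed

lemma sum_UNIV_plus_bool:
  "(\<Sum>i\<in>(UNIV::('a::finite+bool) set). g i) = (\<Sum>j\<in>UNIV. g (Inl j)) + g (Inr False) + g (Inr True)"
proof -
  have "(\<Sum>i\<in>(UNIV::('a::finite+bool) set). g i) = (\<Sum>i\<in>(UNIV <+> UNIV). g i)" by simp
  also have "\<dots> = (\<Sum>j\<in>UNIV. g (Inl j)) + (\<Sum>b\<in>UNIV. g (Inr b))"
    by (subst sum.Plus) auto
  also have "(\<Sum>b\<in>UNIV. g (Inr b)) = g (Inr False) + g (Inr True)"
    by (simp add: UNIV_bool add.commute)
  finally show ?thesis by (simp add: add.assoc)
qed

lemma mat_c_mult: "(mat c - B) *v X = c *s X - B *v (X::'a::comm_ring_1^'n)"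
proof -
  have "mat c *v X = c *s X"
    by (simp add: vec_eq_iff matrix_vector_mult_def mat_def if_distrib[where f="\<lambda>a. a * _"] sum.delta cong: if_cong)
  thus ?thesis by (simp add: matrix_vector_mult_diff_rdistrib)
qed

lemma scalar_part:
  fixes c z1 z2 xk :: complex and a1 a2 th :: real
  assumes "Re c \<ge> 0" "a1 > 0" "a2 > 0" "th > 0"
    and e1: "c * z1 = - a1 * z1 - a2 * z2"
    and e2: "c * z2 = th * xk - a1 * z1 - a2 * z2"
  shows "Re (z2 * cnj xk) \<ge> 0"
proof -
  define d where "d = z2 - z1"
  define w where "w = c + a1 + a2"
  have cd: "c * d = th * xk" unfolding d_def right_diff_distrib e1 e2 by (simp add: algebra_simps)
  have "w * z2 - (c + a1) * d = c * z1 + a1 * z1 + a2 * z2" by (simp add: w_def d_def algebra_simps)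
  also have "\<dots> = 0" unfolding e1 by (simp add: algebra_simps)
  finally have wz: "w * z2 = (c + a1) * d" by simp
  have cnjx: "th * cnj xk = cnj c * cnj d"
    using arg_cong[OF cd, of cnj] by simp
  have key: "th * (w * cnj w) * (z2 * cnj xk) = ((c + a1) * cnj c * cnj w) * (d * cnj d)"
  proof -
    have "th * (w * cnj w) * (z2 * cnj xk) = cnj w * (w * z2) * (th * cnj xk)"
      by (simp add: algebra_simps)
    also have "\<dots> = cnj w * ((c + a1) * d) * (cnj c * cnj d)" by (simp add: wz cnjx)
    finally show ?thesis by (simp add: algebra_simps)
  qed
  have ww: "w * cnj w = of_real ((Re w)\<^sup>2 + (Im w)\<^sup>2)" by (simp add: complex_mult_cnj)
  have dd: "d * cnj d = of_real ((Re d)\<^sup>2 + (Im d)\<^sup>2)" by (simp add: complex_mult_cnj)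
  have wpos: "(Re w)\<^sup>2 + (Im w)\<^sup>2 > 0"
  proof -
    have "Re w > 0" using assms by (simp add: w_def)
    thus ?thesis by (simp add: add_pos_nonneg)
  qed
  have R: "Re ((c + a1) * cnj c * cnj w) = ((Re c)\<^sup>2 + a1 * Re c) * (Re c + a1 + a2) + (Im c)\<^sup>2 * (Re c + a2)"
    by (simp add: w_def algebra_simps power2_eq_square)
  have Rnn: "Re ((c + a1) * cnj c * cnj w) \<ge> 0"
    unfolding R using assms by (intro add_nonneg_nonneg mult_nonneg_nonneg) auto
  have "Re (of_real th * (w * cnj w) * (z2 * cnj xk)) = th * ((Re w)\<^sup>2 + (Im w)\<^sup>2) * Re (z2 * cnj xk)"
    unfolding ww by (simp add: mult.assoc)
  moreover have "Re (((c + a1) * cnj c * cnj w) * (d * cnj d)) = Re ((c + a1) * cnj c * cnj w) * ((Re d)\<^sup>2 + (Im d)\<^sup>2)"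
    unfolding dd by simp
  ultimately have "th * ((Re w)\<^sup>2 + (Im w)\<^sup>2) * Re (z2 * cnj xk) \<ge> 0"
    using key Rnn by (metis mult_nonneg_nonneg zero_le_power2 add_nonneg_nonneg)
  moreover have "0 < th * ((Re w)\<^sup>2 + (Im w)\<^sup>2)" using wpos assms(4) by simp
  ultimately show ?thesis using zero_le_mult_iff by (metis not_le)
qed

lemma tr_dot: "u \<bullet> (transpose B *v w) = (B *v u) \<bullet> (w::real^'n)" for B :: "real^'n^'n"
  by (metis dot_lmul_matrix vector_transpose_matrix)

lemma quad:
  fixes Ah P :: "real^'n^'n"
  assumes "transpose P = P"
  shows "u \<bullet> ((transpose Ah ** P + P ** Ah) *v u) = 2 * ((Ah *v u) \<bullet> (P *v u))"
proof -
  have "u \<bullet> ((transpose Ah ** P + P ** Ah) *v u) = u \<bullet> (transpose Ah *v (P *v u)) + u \<bullet> (P *v (Ah *v u))"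
    by (simp add: matrix_vector_mult_add_rdistrib matrix_vector_mul_assoc inner_add_right)
  moreover have "u \<bullet> (transpose Ah *v (P *v u)) = (Ah *v u) \<bullet> (P *v u)" by (rule tr_dot)
  moreover have "u \<bullet> (P *v (Ah *v u)) = (Ah *v u) \<bullet> (P *v u)"
    using tr_dot[of u P "Ah *v u"] assms by (simp add: inner_commute)
  ultimately show ?thesis by simp
qed

lemma sum_if_mult: "(\<Sum>j\<in>(UNIV::'a::finite set). (if j = k then a else 0) * g j) = a * (g k :: 'b::comm_ring_1)"
proof -
  have "(\<Sum>j\<in>(UNIV::'a set). (if j = k then a else 0) * g j) = (\<Sum>j\<in>UNIV. if j = k then a * g j else 0)"
    by (rule sum.cong) auto
  thus ?thesis by simp
qed

lemma sum_if_mult_c: "(\<Sum>j\<in>(UNIV::'a::finite set). complex_of_real (if j = k then a else 0) * g j) = of_real a * g k"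
proof -
  have "(\<Sum>j\<in>(UNIV::'a set). complex_of_real (if j = k then a else 0) * g j) = (\<Sum>j\<in>UNIV. (if j = k then of_real a else 0) * g j)"
    by (rule sum.cong) auto
  thus ?thesis by (simp only: sum_if_mult)
qed

definition jac :: "real^'n^'n \<Rightarrow> 'n \<Rightarrow> real \<Rightarrow> real \<Rightarrow> real \<Rightarrow> real \<Rightarrow> real^('n+bool)^('n+bool)" where
 "jac Ah k kr th a1 a2 = (\<chi> i l. case i of
   Inl j \<Rightarrow> (case l of Inl m \<Rightarrow> Ah$j$m | Inr False \<Rightarrow> 0 | Inr True \<Rightarrow> if j = k then - kr else 0)
 | Inr False \<Rightarrow> (case l of Inl m \<Rightarrow> 0 | Inr False \<Rightarrow> - a1 | Inr True \<Rightarrow> - a2)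
 | Inr True \<Rightarrow> (case l of Inl m \<Rightarrow> if m = k then th else 0 | Inr False \<Rightarrow> - a1 | Inr True \<Rightarrow> - a2))"

lemma hurwitz_jac:
  fixes Ah P :: "real^'n^'n"
  assumes P_sym: "transpose P = P"
    and P_pd: "pos_def P"
    and P_blk: "\<forall>j. P $ k $ j = (if j = k then 1 else 0)"
    and LMI: "neg_def (transpose Ah ** P + P ** Ah)"
    and pos: "kr > 0" "th > 0" "a1 > 0" "a2 > 0"
  shows "hurwitz (jac Ah k kr th a1 a2)"
  unfolding hurwitz_def
proof (intro allI impI)
  fix c :: complex
  let ?A = "jac Ah k kr th a1 a2"
  let ?AC = "(\<chi> i j. complex_of_real (?A $ i $ j))"
  assume "det (mat c - ?AC) = 0"
  then obtain X where X0: "X \<noteq> 0" and MX: "(mat c - ?AC) *v X = 0"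
    using det0_kernel by blast
  have rowI: "c * X$i = (\<Sum>l\<in>UNIV. of_real (?A$i$l) * X$l)" for i
  proof -
    have "c *s X = ?AC *v X" using MX by (simp add: mat_c_mult)
    hence "(c *s X)$i = (?AC *v X)$i" by simp
    thus ?thesis by (simp add: matrix_vector_mult_def)
  qed
  define z1 where "z1 = X $ Inr False"
  define z2 where "z2 = X $ Inr True"
  define xk where "xk = X $ Inl k"
  have rowL: "c * X$Inl j = (\<Sum>m\<in>UNIV. of_real (Ah$j$m) * X$Inl m) - (if j = k then of_real kr * z2 else 0)" for j
    using rowI[of "Inl j"] by (simp add: sum_UNIV_plus_bool jac_def z2_def)
  have rowF: "c * z1 = - a1 * z1 - a2 * z2"
    using rowI[of "Inr False"] by (simp add: sum_UNIV_plus_bool jac_def z2_def z1_def)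
  have rowT: "c * z2 = th * xk - a1 * z1 - a2 * z2"
    using rowI[of "Inr True"] by (simp add: sum_UNIV_plus_bool jac_def z2_def z1_def xk_def sum_if_mult_c)
  show "Re c < 0"
  proof (rule ccontr)
    assume "\<not> Re c < 0"
    hence cnn: "Re c \<ge> 0" by simp
    define u where "u = (\<chi> m. Re (X $ Inl m))"
    define v where "v = (\<chi> m. Im (X $ Inl m))"
    have Au: "Ah *v u = Re c *\<^sub>R u - Im c *\<^sub>R v + (kr * Re z2) *\<^sub>R axis k 1"
    proof (subst vec_eq_iff, intro allI)
      fix j
      have "Re (c * X$Inl j) = Re (\<Sum>m\<in>UNIV. of_real (Ah$j$m) * X$Inl m) - (if j = k then kr * Re z2 else 0)"
        using rowL[of j] by simp
      thus "(Ah *v u) $ j = (Re c *\<^sub>R u - Im c *\<^sub>R v + (kr * Re z2) *\<^sub>R axis k 1) $ j"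
        by (auto simp: matrix_vector_mult_def u_def v_def Re_sum axis_def)
    qed
    have Av: "Ah *v v = Re c *\<^sub>R v + Im c *\<^sub>R u + (kr * Im z2) *\<^sub>R axis k 1"
    proof (subst vec_eq_iff, intro allI)
      fix j
      have "Im (c * X$Inl j) = Im (\<Sum>m\<in>UNIV. of_real (Ah$j$m) * X$Inl m) - (if j = k then kr * Im z2 else 0)"
        using rowL[of j] by simp
      thus "(Ah *v v) $ j = (Re c *\<^sub>R v + Im c *\<^sub>R u + (kr * Im z2) *\<^sub>R axis k 1) $ j"
        by (auto simp: matrix_vector_mult_def u_def v_def Im_sum axis_def)
    qed
    have Pk: "(P *v w) $ k = w $ k" for w :: "real^'n"
    proof -
      have "(\<Sum>j\<in>UNIV. P$k$j * w$j) = (\<Sum>j\<in>UNIV. (if j = k then 1 else 0) * w$j)"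
        by (rule sum.cong) (auto simp: P_blk)
      thus ?thesis by (simp add: matrix_vector_mult_def sum_if_mult del: mult_1 mult_1_left)
    qed
    have Psym: "v \<bullet> (P *v u) = u \<bullet> (P *v v)"
      using tr_dot[of v P u] tr_dot[of u P v] P_sym by (simp add: inner_commute)
    have axd: "axis k 1 \<bullet> w = w $ k" for w :: "real^'n"
      by (simp add: inner_commute inner_axis)
    have pd: "w \<bullet> (P *v w) \<ge> 0" for w
      using P_pd unfolding pos_def_def by (cases "w = 0") (auto intro: less_imp_le)
    have uk: "u $ k = Re xk" and vk: "v $ k = Im xk" by (simp_all add: u_def v_def xk_def)
    let ?Q = "transpose Ah ** P + P ** Ah"
    have S: "u \<bullet> (?Q *v u) + v \<bullet> (?Q *v v) =
      2 * (Re c * (u \<bullet> (P *v u) + v \<bullet> (P *v v)) + kr * Re (z2 * cnj xk))"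
      unfolding quad[OF P_sym] Au Av
      by (simp add: inner_add_left inner_diff_left axd Pk Psym algebra_simps uk vk)
    have "Re (z2 * cnj xk) \<ge> 0"
      using scalar_part[OF cnn pos(3) pos(4) pos(2) rowF rowT] .
    hence Snn: "u \<bullet> (?Q *v u) + v \<bullet> (?Q *v v) \<ge> 0"
      unfolding S using cnn pd pos by (intro mult_nonneg_nonneg add_nonneg_nonneg) auto
    have nd: "w \<bullet> (?Q *v w) \<le> 0" for w
      using LMI unfolding neg_def_def by (cases "w = 0") (auto intro: less_imp_le)
    have u0: "u = 0"
    proof (rule ccontr)
      assume "u \<noteq> 0"
      hence "u \<bullet> (?Q *v u) < 0" using LMI unfolding neg_def_def by blast
      thus False using Snn nd[of v] by linarith
    qed
    have v0: "v = 0"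
    proof (rule ccontr)
      assume "v \<noteq> 0"
      hence "v \<bullet> (?Q *v v) < 0" using LMI unfolding neg_def_def by blast
      thus False using Snn nd[of u] by linarith
    qed
    have XL: "X $ Inl m = 0" for m
      using u0 v0 unfolding u_def v_def vec_eq_iff by (simp add: complex_eq_iff)
    have "of_real kr * z2 = 0" using rowL[of k] by (simp add: XL)
    hence z20: "z2 = 0" using pos by simp
    have "(c + a1) * z1 = 0" using rowF z20 by (simp add: algebra_simps)
    moreover have "c + a1 \<noteq> 0"
    proof
      assume "c + of_real a1 = 0"
      hence "Re (c + a1) = 0" by simp
      thus False using cnn pos by simp
    qed
    ultimately have z10: "z1 = 0" by simp
    have "X = 0"
    proof (subst vec_eq_iff, intro allI)
      fix i show "X $ i = 0 $ i"
        using XL z10 z20 unfolding z1_def z2_def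
        by (cases i) (auto, metis (full_types))
    qed
    thus False using X0 by simp
  qed
qed

lemma proj_deriv: "((\<lambda>X::real^('n::finite+bool). \<chi> j. X $ Inl j) has_derivative (\<lambda>h. \<chi> j. h $ Inl j)) (at a within S)"
  by (rule vec_lambda_has_derivative) (rule bounded_linear_imp_has_derivative[OF bounded_linear_vec_nth])

lemma nth_deriv: "((\<lambda>X::real^'m. X $ i) has_derivative (\<lambda>h. h $ i)) (at a within S)"
  by (rule bounded_linear_imp_has_derivative[OF bounded_linear_vec_nth])

theorem mainTheorem14:
  fixes f :: "real^'n \<Rightarrow> real^'n"
    and Df :: "real^'n \<Rightarrow> real^'n^'n"
    and k :: 'n
    and b0 xs :: "real^'n"
    and \<mu> \<theta> us :: real
    and P :: "real^'n^'n"
  assumes n2: "CARD('n) \<ge> 2"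
    and deriv: "\<And>x. (f has_derivative (\<lambda>h. Df x *v h)) (at x)"
    and C1: "continuous_on UNIV Df"
    and b0_nonneg: "\<forall>i. b0 $ i \<ge> 0"
    and mu_pos: "\<mu> > 0" and theta_pos: "\<theta> > 0"
    and xs_nonneg: "\<forall>i. xs $ i \<ge> 0"
    and us_pos: "us > 0"
    and xs_k: "xs $ k = \<mu> / \<theta>"
    and eq: "f xs - (us * (\<mu> / \<theta>)) *\<^sub>R axis k 1 + b0 = 0"
    and Hn: "matrix_inv (- (Df xs - us *\<^sub>R (\<chi> i j. if i = k \<and> j = k then 1 else 0))) $ k $ k > 0"
    and P_sym: "transpose P = P"
    and P_pd: "pos_def P"
    and P_blk: "\<forall>j. P $ k $ j = (if j = k then 1 else 0)"
    and LMI: "neg_def (transpose (Df xs - us *\<^sub>R (\<chi> i j. if i = k \<and> j = k then 1 else 0)) ** P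
                     + P ** (Df xs - us *\<^sub>R (\<chi> i j. if i = k \<and> j = k then 1 else 0)))"
  shows "\<forall>\<eta> kp. \<eta> > 0 \<longrightarrow> kp > 0 \<longrightarrow>
           closed_loop f b0 k \<mu> \<theta> \<eta> kp (state_of xs (\<mu> / (\<eta> * us)) (us / kp)) = 0 \<and>
           (\<exists>A. (closed_loop f b0 k \<mu> \<theta> \<eta> kp has_derivative (\<lambda>h. A *v h))
                    (at (state_of xs (\<mu> / (\<eta> * us)) (us / kp))) \<and> hurwitz A)"
proof (intro allI impI)
  fix \<eta> kp :: real
  assume eta: "\<eta> > 0" and kp: "kp > 0"
  define z1s where "z1s = \<mu> / (\<eta> * us)"
  define z2s where "z2s = us / kp"
  define a where "a = state_of xs z1s z2s"
  define Ah where "Ah = Df xs - us *\<^sub>R (\<chi> i j. if i = k \<and> j = k then 1 else (0::real))"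
  define A where "A = jac Ah k (kp * xs$k) \<theta> (\<eta> * us) (kp * \<mu> / us)"
  have kz2: "kp * z2s = us" using kp by (simp add: z2s_def)
  have ekz1: "\<eta> * kp * z1s = kp * \<mu> / us" using eta us_pos by (simp add: z1s_def)
  have ekz2: "\<eta> * kp * z2s = \<eta> * us" using kz2 by (simp add: mult.assoc)
  have pia: "(\<chi> j. a $ Inl j) = xs" by (simp add: a_def state_of_def vec_eq_iff)
  have aF: "a $ Inr False = z1s" and aT: "a $ Inr True = z2s" by (simp_all add: a_def state_of_def)
  have eqm: "f xs - (kp * xs $ k * z2s) *\<^sub>R axis k 1 + b0 = 0"
  proof -
    have "kp * xs $ k * z2s = us * (\<mu> / \<theta>)" using kz2 xs_k by (simp add: algebra_simps)
    thus ?thesis using eq by simp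
  qed
  have equil: "closed_loop f b0 k \<mu> \<theta> \<eta> kp a = 0"
  proof (subst vec_eq_iff, intro allI)
    fix i :: "'n + bool"
    show "closed_loop f b0 k \<mu> \<theta> \<eta> kp a $ i = 0 $ i"
    proof (cases i)
      case (Inl j)
      then show ?thesis using arg_cong[OF eqm, of "\<lambda>v. v $ j"]
        by (simp add: closed_loop_def Let_def pia aT del: vector_add_component vector_minus_component)
    next
      case (Inr b)
      then show ?thesis
        using ekz1 mu_pos us_pos theta_pos xs_k kp
        by (cases b) (auto simp: closed_loop_def Let_def pia aT aF z1s_def z2s_def field_simps)
    qed
  qed
  have hur: "hurwitz A"
    unfolding A_def
  proof (rule hurwitz_jac[OF P_sym P_pd P_blk])
    show "neg_def (transpose Ah ** P + P ** Ah)" using LMI by (simp add: Ah_def)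
    show "kp * xs $ k > 0" using kp xs_k mu_pos theta_pos by simp
  qed (use theta_pos eta us_pos kp mu_pos in auto)
  have fpi: "((\<lambda>X. f (\<chi> j. X$Inl j)) has_derivative (\<lambda>h. Df xs *v (\<chi> j. h$Inl j))) (at a)"
    using has_derivative_compose[OF proj_deriv deriv[of "(\<chi> j. a$Inl j)"], of UNIV] pia by simp
  have m1: "((\<lambda>X. X$Inl k * X$Inr True) has_derivative (\<lambda>h. a$Inl k * h$Inr True + h$Inl k * a$Inr True)) (at a)"
    by (rule has_derivative_mult[OF nth_deriv nth_deriv])
  have m2: "((\<lambda>X. (kp * (X$Inl k * X$Inr True)) *\<^sub>R axis k (1::real)) has_derivative
      (\<lambda>h. (kp * (a$Inl k * h$Inr True + h$Inl k * a$Inr True)) *\<^sub>R axis k 1)) (at a)"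
    by (intro has_derivative_scaleR_left has_derivative_mult_right m1)
  have Dv: "((\<lambda>X. f (\<chi> j. X$Inl j) - (kp * (X$Inl k * X$Inr True)) *\<^sub>R axis k 1 + b0) has_derivative
      (\<lambda>h. Df xs *v (\<chi> j. h$Inl j) - (kp * (a$Inl k * h$Inr True + h$Inl k * a$Inr True)) *\<^sub>R axis k 1)) (at a)"
    by (intro has_derivative_add_const has_derivative_diff fpi m2)
  have mF: "((\<lambda>X. \<mu> - \<eta> * kp * (X$Inr False * X$Inr True)) has_derivative
      (\<lambda>h. 0 - \<eta> * kp * (a$Inr False * h$Inr True + h$Inr False * a$Inr True))) (at a)"
    by (intro has_derivative_diff has_derivative_const has_derivative_mult_right has_derivative_mult nth_deriv)
  have mT: "((\<lambda>X. \<theta> * X$Inl k - \<eta> * kp * (X$Inr False * X$Inr True)) has_derivative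
      (\<lambda>h. \<theta> * h$Inl k - \<eta> * kp * (a$Inr False * h$Inr True + h$Inr False * a$Inr True))) (at a)"
    by (intro has_derivative_diff has_derivative_const has_derivative_mult_right has_derivative_mult nth_deriv)
  have der0: "(closed_loop f b0 k \<mu> \<theta> \<eta> kp has_derivative (\<lambda>h. \<chi> i. (A *v h)$i)) (at a)"
    unfolding closed_loop_def Let_def
  proof (rule vec_lambda_has_derivative, goal_cases)
    case (1 i)
    show ?case
    proof (cases i)
      case (Inl j)
      have Dj: "((\<lambda>X. (f (\<chi> j. X$Inl j) - (kp * (X$Inl k * X$Inr True)) *\<^sub>R axis k 1 + b0) $ j) has_derivative
         (\<lambda>h. (A *v h) $ Inl j)) (at a)"
      proof (rule has_derivative_eq_rhs[OF bounded_linear.has_derivative[OF bounded_linear_vec_nth Dv]])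
        show "(\<lambda>h. (Df xs *v (\<chi> j. h$Inl j) - (kp * (a$Inl k * h$Inr True + h$Inl k * a$Inr True)) *\<^sub>R axis k 1) $ j)
          = (\<lambda>h. (A *v h) $ Inl j)"
        proof
          fix h :: "real^('n+bool)"
          show "(Df xs *v (\<chi> j. h$Inl j) - (kp * (a$Inl k * h$Inr True + h$Inl k * a$Inr True)) *\<^sub>R axis k 1) $ j
            = (A *v h) $ Inl j"
          proof -
            have aK: "a $ Inl k = xs $ k" by (simp add: a_def state_of_def)
            have L: "(Df xs *v (\<chi> j. h$Inl j) - (kp * (a$Inl k * h$Inr True + h$Inl k * a$Inr True)) *\<^sub>R axis k 1) $ j
              = (\<Sum>m\<in>UNIV. Df xs$j$m * h$Inl m) - (if j = k then kp*xs$k*h$Inr True + us*h$Inl k else 0)"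
              using kz2 by (simp add: matrix_vector_mult_def aK aT axis_def algebra_simps)
            have R: "(A *v h) $ Inl j = (\<Sum>m\<in>UNIV. Ah$j$m * h$Inl m) + (if j = k then -(kp*xs$k) else 0) * h$Inr True"
              by (simp add: matrix_vector_mult_def sum_UNIV_plus_bool A_def jac_def)
            have S: "(\<Sum>m\<in>UNIV. Ah$j$m * h$Inl m) = (\<Sum>m\<in>UNIV. Df xs$j$m * h$Inl m) - (if j = k then us*h$Inl k else 0)"
            proof (cases "j = k")
              case True
              have "(\<Sum>m\<in>UNIV. Ah$j$m * h$Inl m) = (\<Sum>m\<in>UNIV. Df xs$j$m * h$Inl m - (if m = k then us else 0) * h$Inl m)"
                by (rule sum.cong) (auto simp: Ah_def True algebra_simps)
              also have "\<dots> = (\<Sum>m\<in>UNIV. Df xs$j$m * h$Inl m) - us * h$Inl k"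
                by (simp only: sum_subtractf sum_if_mult)
              finally show ?thesis using True by simp
            next
              case False
              thus ?thesis by (simp add: Ah_def)
            qed
            show ?thesis unfolding L R S by (auto simp: algebra_simps)
          qed
        qed
      qed
      show ?thesis using Dj Inl by (simp add: mult.assoc)
    next
      case (Inr b)
      show ?thesis
      proof (cases b)
        case True
        have "(\<lambda>h. \<theta> * h$Inl k - \<eta> * kp * (a$Inr False * h$Inr True + h$Inr False * a$Inr True)) = (\<lambda>h. (A *v h) $ Inr True)"
        proof
          fix h :: "real^('n+bool)"
          have "(A *v h) $ Inr True = \<theta> * h$Inl k - \<eta> * us * h$Inr False - kp * \<mu> / us * h$Inr True"
            by (simp add: matrix_vector_mult_def sum_UNIV_plus_bool A_def jac_def sum_if_mult)
          thus "\<theta> * h$Inl k - \<eta> * kp * (a$Inr False * h$Inr True + h$Inr False * a$Inr True) = (A *v h) $ Inr True"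
          proof -
            have "\<eta> * kp * (a$Inr False * h$Inr True + h$Inr False * a$Inr True) = (\<eta>*kp*z1s) * h$Inr True + (\<eta>*kp*z2s)*h$Inr False"
              by (simp add: aF aT algebra_simps)
            thus ?thesis unfolding ekz1 ekz2 using \<open>(A *v h) $ _ = _\<close> by simp
          qed
        qed
        thus ?thesis using mT Inr True by (simp add: mult.assoc)
      next
        case False
        have "(\<lambda>h. 0 - \<eta> * kp * (a$Inr False * h$Inr True + h$Inr False * a$Inr True)) = (\<lambda>h. (A *v h) $ Inr False)"
        proof
          fix h :: "real^('n+bool)"
          have "(A *v h) $ Inr False = - \<eta> * us * h$Inr False - kp * \<mu> / us * h$Inr True"
            by (simp add: matrix_vector_mult_def sum_UNIV_plus_bool A_def jac_def)
          thus "0 - \<eta> * kp * (a$Inr False * h$Inr True + h$Inr False * a$Inr True) = (A *v h) $ Inr False"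
          proof -
            have "\<eta> * kp * (a$Inr False * h$Inr True + h$Inr False * a$Inr True) = (\<eta>*kp*z1s) * h$Inr True + (\<eta>*kp*z2s)*h$Inr False"
              by (simp add: aF aT algebra_simps)
            thus ?thesis unfolding ekz1 ekz2 using \<open>(A *v h) $ _ = _\<close> by simp
          qed
        qed
        thus ?thesis using mF Inr False by (simp add: mult.assoc)
      qed
    qed
  qed
  have der: "(closed_loop f b0 k \<mu> \<theta> \<eta> kp has_derivative (\<lambda>h. A *v h)) (at a)"
    using der0 by simp
  show "closed_loop f b0 k \<mu> \<theta> \<eta> kp (state_of xs (\<mu> / (\<eta> * us)) (us / kp)) = 0 \<and>
           (\<exists>A. (closed_loop f b0 k \<mu> \<theta> \<eta> kp has_derivative (\<lambda>h. A *v h))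
                    (at (state_of xs (\<mu> / (\<eta> * us)) (us / kp))) \<and> hurwitz A)"
    using equil der hur unfolding a_def z1s_def z2s_def by blast
qed

end
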